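(* Suppose $\eta_jL<1$. For the biased batched SVRG (Algorithm 3), $$(1-\lambda)\big(1-(1-\lambda)L\eta_j\big)\eta_jB_j\,\mathbb{E}\|\nabla f(\tilde x_j)\|^2+\eta_jB_j\,\mathbb{E}\langle e_j,\nabla f(\tilde x_j)\rangle\le b_j\,\mathbb{E}\big(f(\tilde x_{j-1})-f(\tilde x_j)\big)+\frac{(1-\lambda)^2\eta_j^2B_jL^3}{2b_j}\mathbb{E}\|\tilde x_j-\tilde x_{j-1}\|^2+L\eta_j^2B_j\,\mathbb{E}\|e_j\|^2.$$
   Context: Setting: $f(x)=\frac1n\sum_{i=1}^n f_i(x)$ with each $f_i:\mathbb{R}^d\to\mathbb{R}$ differentiable and $L$-smooth: $\|\nabla f_i(x)-\nabla f_i(y)\|\le L\|x-y\|$. For $\mathcal I\subset\{1,\dots,n\}$, $\nabla f_{\mathcal I}(x)=\frac1{|\mathcal I|}\sum_{i\in\mathcal I}\nabla f_i(x)$. $N\sim\mathrm{Geom}(\gamma')$ means $P(N=k)=(1-\gamma')\gamma'^k$, $k\ge0$. Epoch $j$ of the batched SVRG scheme: $\mathcal I_j$ uniformly random of size $B_j$, $g_j=\nabla f_{\mathcal I_j}(\tilde x_{j-1})$, $x^{(j)}_0=\tilde x_{j-1}$; $N_j\sim\mathrm{Geom}(B_j/(B_j+b_j))$ drawn independently (mean $B_j/b_j$); for $k=0,\dots,N_j-1$, $\tilde{\mathcal I}_k$ uniformly random of size $b_j$ and $x^{(j)}_{k+1}=x^{(j)}_k-\eta_jv^{(j)}_k$;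 $\tilde x_j=x^{(j)}_{N_j}$. Algorithm 3 (biased, $0<\lambda<1$): $v^{(j)}_k=(1-\lambda)(\nabla f_{\tilde{\mathcal I}_k}(x^{(j)}_k)-\nabla f_{\tilde{\mathcal I}_k}(x^{(j)}_0))+\lambda g_j$, and $e_j=\lambda\nabla f_{\mathcal I_j}(\tilde x_{j-1})-(1-\lambda)\nabla f(\tilde x_{j-1})$. $\mathbb{E}$ is expectation over all randomness. *)

theory Defs
  imports "HOL-Analysis.Analysis" "HOL-Probability.Probability"
begin

definition subsets_of_size :: "nat \<Rightarrow> nat \<Rightarrow> nat set set" where
  "subsets_of_size n m = {S. S \<subseteq> {1..n} \<and> card S = m}"

text \<open>Mini-batch gradient: G i x is the gradient of f_i at x.\<close>
definition gradB :: "(nat \<Rightarrow> 'a \<Rightarrow> 'a::real_vector) \<Rightarrow> nat set \<Rightarrow> 'a \<Rightarrow> 'a" where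
  "gradB G I x = (1 / real (card I)) *\<^sub>R (\<Sum>i\<in>I. G i x)"

definition svrg_step :: "nat \<Rightarrow> (nat \<Rightarrow> 'a \<Rightarrow> 'a::real_vector) \<Rightarrow> real \<Rightarrow> real \<Rightarrow> nat
    \<Rightarrow> 'a \<Rightarrow> 'a \<Rightarrow> 'a \<Rightarrow> 'a pmf" where
  "svrg_step n G lam eta b g x0 x =
     map_pmf (\<lambda>S. x - eta *\<^sub>R ((1 - lam) *\<^sub>R (gradB G S x - gradB G S x0) + lam *\<^sub>R g))
       (pmf_of_set (subsets_of_size n b))"

fun svrg_inner :: "nat \<Rightarrow> (nat \<Rightarrow> 'a \<Rightarrow> 'a::real_vector) \<Rightarrow> real \<Rightarrow> real \<Rightarrow> nat
    \<Rightarrow> 'a \<Rightarrow> 'a \<Rightarrow> nat \<Rightarrow> 'a \<Rightarrow> 'a pmf" where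
  "svrg_inner n G lam eta b g x0 0 x = return_pmf x"
| "svrg_inner n G lam eta b g x0 (Suc k) x =
     bind_pmf (svrg_step n G lam eta b g x0 x) (svrg_inner n G lam eta b g x0 k)"

text \<open>N_j ~ Geom(B/(B+b)), i.e. P(N=k) = (b/(B+b)) (B/(B+b))^k,
  which is geometric_pmf (b/(B+b)) in the library convention.\<close>
definition svrg_epoch :: "nat \<Rightarrow> (nat \<Rightarrow> 'a \<Rightarrow> 'a::real_vector) \<Rightarrow> real \<Rightarrow> real \<Rightarrow> nat \<Rightarrow> nat
    \<Rightarrow> 'a \<Rightarrow> (nat set \<times> 'a) pmf" where
  "svrg_epoch n G lam eta B b x0 =
     bind_pmf (pmf_of_set (subsets_of_size n B)) (\<lambda>I.
       bind_pmf (geometric_pmf (real b / (real B + real b))) (\<lambda>N.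
         map_pmf (\<lambda>x. (I, x)) (svrg_inner n G lam eta b (gradB G I x0) x0 N x0)))"

text \<open>Full joint law of (tilde x_{j-1}, I_j, tilde x_j) when tilde x_{j-1} has law P0.\<close>
definition svrg_joint :: "nat \<Rightarrow> (nat \<Rightarrow> 'a \<Rightarrow> 'a::real_vector) \<Rightarrow> real \<Rightarrow> real \<Rightarrow> nat \<Rightarrow> nat
    \<Rightarrow> 'a pmf \<Rightarrow> ('a \<times> nat set \<times> 'a) pmf" where
  "svrg_joint n G lam eta B b P0 =
     bind_pmf P0 (\<lambda>x0. map_pmf (\<lambda>(I, x). (x0, I, x)) (svrg_epoch n G lam eta B b x0))"

end

theory Submission
  imports Defs
begin


lemma bind_pmf_integral_nonneg:
  fixes h :: "'b \<Rightarrow> real"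
  assumes int: "integrable (measure_pmf (bind_pmf M K)) h" and nn: "\<And>y. 0 \<le> h y"
  shows "(\<forall>x\<in>set_pmf M. integrable (measure_pmf (K x)) h)
       \<and> integrable (measure_pmf M) (\<lambda>x. integral\<^sup>L (K x) h)
       \<and> integral\<^sup>L (bind_pmf M K) h = (\<integral>x. integral\<^sup>L (K x) h \<partial>M)"
proof -
  have fin: "(\<integral>\<^sup>+y. ennreal (h y) \<partial>bind_pmf M K) < \<infinity>"
    using int nn by (auto simp: integrable_iff_bounded)
  hence fin2: "(\<integral>\<^sup>+x. (\<integral>\<^sup>+y. ennreal (h y) \<partial>K x) \<partial>M) \<noteq> \<infinity>" by simp
  have "AE x in M. (\<integral>\<^sup>+y. ennreal (h y) \<partial>K x) \<noteq> \<infinity>"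
    by (rule nn_integral_PInf_AE[OF _ fin2]) simp
  hence fx: "\<forall>x\<in>set_pmf M. (\<integral>\<^sup>+y. ennreal (h y) \<partial>K x) < \<infinity>"
    by (simp add: AE_measure_pmf_iff top.not_eq_extremum)
  have ik: "\<forall>x\<in>set_pmf M. integrable (measure_pmf (K x)) h"
    using fx nn by (auto intro!: integrableI_nonneg)
  have eq: "\<forall>x\<in>set_pmf M. (\<integral>\<^sup>+y. ennreal (h y) \<partial>K x) = ennreal (integral\<^sup>L (K x) h)"
    using ik nn by (auto intro!: nn_integral_eq_integral)
  have eq2: "(\<integral>\<^sup>+x. ennreal (integral\<^sup>L (K x) h) \<partial>M) = (\<integral>\<^sup>+y. ennreal (h y) \<partial>bind_pmf M K)"
    using eq by (auto intro!: nn_integral_cong_AE simp: AE_measure_pmf_iff)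
  have nn2: "\<And>x. 0 \<le> integral\<^sup>L (K x) h" using nn by (simp add: integral_nonneg)
  have im: "integrable (measure_pmf M) (\<lambda>x. integral\<^sup>L (K x) h)"
    using fin eq2 nn2 by (auto intro!: integrableI_nonneg)
  have "integral\<^sup>L (bind_pmf M K) h = enn2real (\<integral>\<^sup>+y. ennreal (h y) \<partial>bind_pmf M K)"
    using nn by (simp add: integral_eq_nn_integral)
  also have "\<dots> = enn2real (\<integral>\<^sup>+x. ennreal (integral\<^sup>L (K x) h) \<partial>M)" using eq2 by simp
  also have "\<dots> = (\<integral>x. integral\<^sup>L (K x) h \<partial>M)"
    using nn2 by (simp add: integral_eq_nn_integral)
  finally show ?thesis using ik im by blast
qed

lemma bind_pmf_integral:
  fixes g :: "'b \<Rightarrow> real"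
  assumes int: "integrable (measure_pmf (bind_pmf M K)) g"
  shows "(\<forall>x\<in>set_pmf M. integrable (measure_pmf (K x)) g)
       \<and> integrable (measure_pmf M) (\<lambda>x. integral\<^sup>L (K x) g)
       \<and> integral\<^sup>L (bind_pmf M K) g = (\<integral>x. integral\<^sup>L (K x) g \<partial>M)"
proof -
  define gp where "gp = (\<lambda>y. max (g y) 0)"
  define gm where "gm = (\<lambda>y. max (- g y) 0)"
  have gpm: "g = (\<lambda>y. gp y - gm y)" unfolding gp_def gm_def by auto
  have ip: "integrable (measure_pmf (bind_pmf M K)) gp" unfolding gp_def using int by auto
  have imm: "integrable (measure_pmf (bind_pmf M K)) gm" unfolding gm_def using int by auto
  have P': "(\<forall>x\<in>set_pmf M. integrable (measure_pmf (K x)) gp)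
       \<and> integrable (measure_pmf M) (\<lambda>x. integral\<^sup>L (K x) gp)
       \<and> integral\<^sup>L (bind_pmf M K) gp = (\<integral>x. integral\<^sup>L (K x) gp \<partial>M)"
    by (rule bind_pmf_integral_nonneg[OF ip]) (simp add: gp_def)
  have N': "(\<forall>x\<in>set_pmf M. integrable (measure_pmf (K x)) gm)
       \<and> integrable (measure_pmf M) (\<lambda>x. integral\<^sup>L (K x) gm)
       \<and> integral\<^sup>L (bind_pmf M K) gm = (\<integral>x. integral\<^sup>L (K x) gm \<partial>M)"
    by (rule bind_pmf_integral_nonneg[OF imm]) (simp add: gm_def)
  have ik: "\<forall>x\<in>set_pmf M. integrable (measure_pmf (K x)) g"
    using P' N' by (subst gpm) auto
  have ceq: "\<forall>x\<in>set_pmf M. integral\<^sup>L (K x) g = integral\<^sup>L (K x) gp - integral\<^sup>L (K x) gm"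
    using P' N' by (subst gpm) (auto intro!: Bochner_Integration.integral_diff)
  have "integrable (measure_pmf M) (\<lambda>x. integral\<^sup>L (K x) gp - integral\<^sup>L (K x) gm)"
    using P' N' by auto
  hence im: "integrable (measure_pmf M) (\<lambda>x. integral\<^sup>L (K x) g)"
    by (rule integrable_cong_AE_imp) (use ceq in \<open>auto simp: AE_measure_pmf_iff\<close>)
  have "integral\<^sup>L (bind_pmf M K) g = integral\<^sup>L (bind_pmf M K) gp - integral\<^sup>L (bind_pmf M K) gm"
    using ip imm by (subst gpm) (rule Bochner_Integration.integral_diff)
  also have "\<dots> = (\<integral>x. integral\<^sup>L (K x) gp - integral\<^sup>L (K x) gm \<partial>M)"
    using P' N' by (simp add: Bochner_Integration.integral_diff)
  also have "\<dots> = (\<integral>x. integral\<^sup>L (K x) g \<partial>M)"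
    using ceq by (intro integral_cong_AE) (auto simp: AE_measure_pmf_iff)
  finally show ?thesis using ik im by blast
qed



lemma geom_sums:
  fixes a :: "nat \<Rightarrow> real"
  assumes "integrable (measure_pmf (geometric_pmf p)) a" "0 < p" "p < 1"
  shows "(\<lambda>k. ((1 - p)^k * p) * a k) sums (\<integral>k. a k \<partial>geometric_pmf p)"
proof -
  have i: "integrable (count_space UNIV) (\<lambda>k. pmf (geometric_pmf p) k * a k)"
    using assms(1) unfolding measure_pmf_eq_density
    by (subst (asm) integrable_density) auto
  have "(\<integral>k. a k \<partial>geometric_pmf p) = (\<integral>k. pmf (geometric_pmf p) k * a k \<partial>count_space UNIV)"
    unfolding measure_pmf_eq_density by (subst integral_density) auto
  with sums_integral_count_space_nat[OF i] show ?thesis using assms(2,3) by simp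
qed

lemma geom_core:
  fixes a c :: "nat \<Rightarrow> real"
  assumes ia: "integrable (measure_pmf (geometric_pmf p)) a"
    and ic: "integrable (measure_pmf (geometric_pmf p)) c"
    and p: "0 < p" "p < 1"
    and step: "\<And>k. a (Suc k) \<le> a k - c k"
  shows "(1 - p) * (\<integral>k. c k \<partial>geometric_pmf p) \<le> p * (a 0 - (\<integral>k. a k \<partial>geometric_pmf p))"
proof -
  let ?w = "\<lambda>k. (1 - p)^k * p"
  define Sa where "Sa = (\<integral>k. a k \<partial>geometric_pmf p)"
  define Sc where "Sc = (\<integral>k. c k \<partial>geometric_pmf p)"
  have sa: "(\<lambda>k. ?w k * a k) sums Sa" unfolding Sa_def by (rule geom_sums[OF ia p])
  have sc: "(\<lambda>k. ?w k * c k) sums Sc" unfolding Sc_def by (rule geom_sums[OF ic p])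
  have "(\<lambda>k. ?w (Suc k) * a (Suc k)) sums (Sa - ?w 0 * a 0)"
    using sa by (subst sums_Suc_iff) simp
  hence "(\<lambda>k. (1 / (1 - p)) * (?w (Suc k) * a (Suc k))) sums ((1 / (1 - p)) * (Sa - p * a 0))"
    by (intro sums_mult) simp
  moreover have "(\<lambda>k. (1 / (1 - p)) * (?w (Suc k) * a (Suc k))) = (\<lambda>k. ?w k * a (Suc k))"
    using p by (simp add: fun_eq_iff)
  ultimately have s1: "(\<lambda>k. ?w k * a (Suc k)) sums ((Sa - p * a 0) / (1 - p))" by simp
  have "(\<lambda>k. ?w k * a k - ?w k * a (Suc k) - ?w k * c k) sums (Sa - (Sa - p * a 0) / (1 - p) - Sc)"
    by (intro sums_diff sa s1 sc)
  moreover have "(\<lambda>k. (0::real)) sums 0" by simp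
  moreover have nnk: "\<And>k. 0 \<le> ?w k * a k - ?w k * a (Suc k) - ?w k * c k"
  proof -
    fix k
    have "0 \<le> ?w k * (a k - a (Suc k) - c k)" using step[of k] p by (intro mult_nonneg_nonneg) auto
    thus "0 \<le> ?w k * a k - ?w k * a (Suc k) - ?w k * c k" by (simp add: algebra_simps)
  qed
  ultimately have "0 \<le> Sa - (Sa - p * a 0) / (1 - p) - Sc"
    by (intro sums_le[OF nnk]) auto
  hence "0 \<le> (1 - p) * (Sa - (Sa - p * a 0) / (1 - p) - Sc)" using p by simp
  also have "(1 - p) * (Sa - (Sa - p * a 0) / (1 - p) - Sc) = (1 - p) * Sa - (Sa - p * a 0) - (1 - p) * Sc"
    using p by (simp add: field_simps)
  finally have "0 \<le> (1 - p) * Sa - (Sa - p * a 0) - (1 - p) * Sc" .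
  thus ?thesis unfolding Sa_def[symmetric] Sc_def[symmetric] by (simp add: algebra_simps)
qed



lemma card_subsets_containing:
  assumes A: "finite A" and C: "C \<subseteq> A" "card C \<le> k"
  shows "card {S. S \<subseteq> A \<and> card S = k \<and> C \<subseteq> S} = (card A - card C) choose (k - card C)"
proof -
  have fC: "finite C" using A C finite_subset by blast
  have "bij_betw (\<lambda>T. T \<union> C) {T. T \<subseteq> A - C \<and> card T = k - card C} {S. S \<subseteq> A \<and> card S = k \<and> C \<subseteq> S}"
  proof (rule bij_betw_byWitness[where f' = "\<lambda>S. S - C"])
    show "\<forall>a\<in>{T. T \<subseteq> A - C \<and> card T = k - card C}. a \<union> C - C = a" by auto
    show "\<forall>a'\<in>{S. S \<subseteq> A \<and> card S = k \<and> C \<subseteq> S}. a' - C \<union> C = a'" by auto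
    show "(\<lambda>T. T \<union> C) ` {T. T \<subseteq> A - C \<and> card T = k - card C} \<subseteq> {S. S \<subseteq> A \<and> card S = k \<and> C \<subseteq> S}"
    proof (rule image_subsetI)
      fix T assume "T \<in> {T. T \<subseteq> A - C \<and> card T = k - card C}"
      hence T: "T \<subseteq> A - C" "card T = k - card C" by auto
      have fT: "finite T" using T A finite_subset by blast
      have "card (T \<union> C) = card T + card C" using T fT fC by (subst card_Un_disjoint) auto
      thus "T \<union> C \<in> {S. S \<subseteq> A \<and> card S = k \<and> C \<subseteq> S}" using T C by auto
    qed
    show "(\<lambda>S. S - C) ` {S. S \<subseteq> A \<and> card S = k \<and> C \<subseteq> S} \<subseteq> {T. T \<subseteq> A - C \<and> card T = k - card C}"
    proof (rule image_subsetI)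
      fix S assume "S \<in> {S. S \<subseteq> A \<and> card S = k \<and> C \<subseteq> S}"
      hence S: "S \<subseteq> A" "C \<subseteq> S" "k = card S" by auto
      have fS: "finite S" using S A finite_subset by blast
      show "S - C \<in> {T. T \<subseteq> A - C \<and> card T = k - card C}"
        using S fS fC by (auto simp: card_Diff_subset)
    qed
  qed
  hence "card {S. S \<subseteq> A \<and> card S = k \<and> C \<subseteq> S} = card {T. T \<subseteq> A - C \<and> card T = k - card C}"
    by (simp add: bij_betw_same_card)
  also have "\<dots> = card (A - C) choose (k - card C)" using A by (simp add: n_subsets)
  also have "card (A - C) = card A - card C" using C fC by (simp add: card_Diff_subset)
  finally show ?thesis .
qed

lemma sum_if_count:
  fixes c :: "'b::real_vector"
  assumes "finite X"
  shows "(\<Sum>S\<in>X. if P S then c else 0) = real (card {S\<in>X. P S}) *\<^sub>R c"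
proof -
  have "(\<Sum>S\<in>X. if P S then c else 0) = (\<Sum>S\<in>{S\<in>X. P S}. c)"
    using assms by (simp add: sum.If_cases Int_def conj_commute)
  also have "\<dots> = real (card {S\<in>X. P S}) *\<^sub>R c" by (rule sum_constant_scaleR)
  finally show ?thesis .
qed

lemma sum_sub_ind:
  fixes u :: "nat \<Rightarrow> 'b::real_vector"
  assumes "finite A" "S \<subseteq> A"
  shows "(\<Sum>i\<in>S. u i) = (\<Sum>i\<in>A. if i \<in> S then u i else 0)"
  using assms by (simp add: sum.If_cases Int_absorb1 Int_commute)

lemma sum_subsets_mean:
  fixes u :: "nat \<Rightarrow> 'b::real_vector"
  assumes A: "finite A"
  shows "(\<Sum>S\<in>{S. S \<subseteq> A \<and> card S = k}. \<Sum>i\<in>S. u i)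
       = (\<Sum>i\<in>A. real (card {S\<in>{S. S \<subseteq> A \<and> card S = k}. i \<in> S}) *\<^sub>R u i)"
proof -
  let ?X = "{S. S \<subseteq> A \<and> card S = k}"
  have fX: "finite ?X" by (rule finite_subset[of _ "Pow A"]) (use A in auto)
  have "(\<Sum>S\<in>?X. \<Sum>i\<in>S. u i) = (\<Sum>S\<in>?X. \<Sum>i\<in>A. if i \<in> S then u i else 0)"
    using A by (intro sum.cong refl sum_sub_ind) auto
  also have "\<dots> = (\<Sum>i\<in>A. \<Sum>S\<in>?X. if i \<in> S then u i else 0)" by (rule sum.swap)
  also have "\<dots> = (\<Sum>i\<in>A. real (card {S\<in>?X. i \<in> S}) *\<^sub>R u i)"
    using fX by (intro sum.cong refl sum_if_count)
  finally show ?thesis .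
qed

lemma sum_subsets_pairs:
  fixes phi :: "nat \<Rightarrow> nat \<Rightarrow> real"
  assumes A: "finite A"
  shows "(\<Sum>S\<in>{S. S \<subseteq> A \<and> card S = k}. \<Sum>i\<in>S. \<Sum>j\<in>S. phi i j)
       = (\<Sum>i\<in>A. \<Sum>j\<in>A. real (card {S\<in>{S. S \<subseteq> A \<and> card S = k}. i \<in> S \<and> j \<in> S}) * phi i j)"
proof -
  let ?X = "{S. S \<subseteq> A \<and> card S = k}"
  have fX: "finite ?X" by (rule finite_subset[of _ "Pow A"]) (use A in auto)
  have "(\<Sum>S\<in>?X. \<Sum>i\<in>S. \<Sum>j\<in>S. phi i j) = (\<Sum>S\<in>?X. \<Sum>i\<in>A. \<Sum>j\<in>A. if i \<in> S \<and> j \<in> S then phi i j else 0)"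
  proof (rule sum.cong[OF refl])
    fix S assume "S \<in> ?X"
    hence S: "S \<subseteq> A" by auto
    have "(\<Sum>i\<in>S. \<Sum>j\<in>S. phi i j) = (\<Sum>i\<in>A. if i \<in> S then (\<Sum>j\<in>S. phi i j) else 0)"
      by (rule sum_sub_ind[OF A S])
    also have "\<dots> = (\<Sum>i\<in>A. if i \<in> S then (\<Sum>j\<in>A. if j \<in> S then phi i j else 0) else 0)"
      by (intro sum.cong refl) (simp add: sum_sub_ind[OF A S])
    also have "\<dots> = (\<Sum>i\<in>A. \<Sum>j\<in>A. if i \<in> S \<and> j \<in> S then phi i j else 0)"
      by (intro sum.cong refl) auto
    finally show "(\<Sum>i\<in>S. \<Sum>j\<in>S. phi i j) = (\<Sum>i\<in>A. \<Sum>j\<in>A. if i \<in> S \<and> j \<in> S then phi i j else 0)" .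
  qed
  also have "\<dots> = (\<Sum>i\<in>A. \<Sum>S\<in>?X. \<Sum>j\<in>A. if i \<in> S \<and> j \<in> S then phi i j else 0)" by (rule sum.swap)
  also have "\<dots> = (\<Sum>i\<in>A. \<Sum>j\<in>A. \<Sum>S\<in>?X. if i \<in> S \<and> j \<in> S then phi i j else 0)"
    by (intro sum.cong refl sum.swap)
  also have "\<dots> = (\<Sum>i\<in>A. \<Sum>j\<in>A. real (card {S\<in>?X. i \<in> S \<and> j \<in> S}) * phi i j)"
    using fX by (intro sum.cong refl) (simp add: sum_if_count)
  finally show ?thesis .
qed

lemma count1:
  assumes A: "finite A" "card A = n" and i: "i \<in> A" and b: "1 \<le> b"
  shows "card {S. S \<subseteq> A \<and> card S = b \<and> i \<in> S} = (n - 1) choose (b - 1)"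
proof -
  have "{S. S \<subseteq> A \<and> card S = b \<and> i \<in> S} = {S. S \<subseteq> A \<and> card S = b \<and> {i} \<subseteq> S}" by auto
  thus ?thesis using card_subsets_containing[of A "{i}" b] A i b by simp
qed

lemma count2:
  assumes A: "finite A" "card A = n" and i: "i \<in> A" "j \<in> A" "i \<noteq> j"
  shows "card {S. S \<subseteq> A \<and> card S = b \<and> i \<in> S \<and> j \<in> S} = (if 2 \<le> b then (n - 2) choose (b - 2) else 0)"
proof (cases "2 \<le> b")
  case True
  have "{S. S \<subseteq> A \<and> card S = b \<and> i \<in> S \<and> j \<in> S} = {S. S \<subseteq> A \<and> card S = b \<and> {i,j} \<subseteq> S}" by auto
  thus ?thesis using card_subsets_containing[of A "{i,j}" b] A i True by (simp add: numeral_2_eq_2)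
next
  case False
  have E: "{S. S \<subseteq> A \<and> card S = b \<and> i \<in> S \<and> j \<in> S} = {}"
  proof (rule ccontr)
    assume "{S. S \<subseteq> A \<and> card S = b \<and> i \<in> S \<and> j \<in> S} \<noteq> {}"
    then obtain S where S: "S \<subseteq> A" "card S = b" "i \<in> S" "j \<in> S" by auto
    have "finite S" using S A finite_subset by blast
    hence "card {i,j} \<le> card S" using S by (intro card_mono) auto
    thus False using S False i by simp
  qed
  show ?thesis using False by (simp only: E card.empty) simp
qed

lemma binom_rel1:
  assumes "1 \<le> b" 
  shows "real b * real (n choose b) = real n * real ((n - 1) choose (b - 1))"
  using times_binomial_minus1_eq[of b n] assms by (metis of_nat_mult le_less_trans less_numeral_extra(1) zero_less_iff_neq_zero le_neq_implies_less less_one not_one_le_zero)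

lemma subsets_mean:
  fixes u :: "nat \<Rightarrow> 'b::real_vector"
  assumes A: "finite A" "card A = n" and b: "1 \<le> b" "b \<le> n"
  shows "(\<Sum>S\<in>{S. S \<subseteq> A \<and> card S = b}. \<Sum>i\<in>S. u i)
       = real ((n - 1) choose (b - 1)) *\<^sub>R (\<Sum>i\<in>A. u i)"
  using A b by (simp add: sum_subsets_mean count1[OF A _ b(1)] scaleR_sum_right)

lemma subsets_var:
  fixes d :: "nat \<Rightarrow> 'b::real_inner"
  assumes A: "finite A" "card A = n" and b: "1 \<le> b" "b \<le> n"
  shows "(\<Sum>S\<in>{S. S \<subseteq> A \<and> card S = b}. (norm (\<Sum>i\<in>S. d i))\<^sup>2) * (real n)\<^sup>2
       \<le> real (n choose b) * (real b)\<^sup>2 * (norm (\<Sum>i\<in>A. d i))\<^sup>2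
         + real (n choose b) * real b * real n * (\<Sum>i\<in>A. (norm (d i))\<^sup>2)"
proof -
  let ?X = "{S. S \<subseteq> A \<and> card S = b}"
  define c1 where "c1 = real ((n - 1) choose (b - 1))"
  define c2 where "c2 = real (if 2 \<le> b then (n - 2) choose (b - 2) else 0)"
  define N where "N = real (n choose b)"
  have cnt: "\<And>i j. i \<in> A \<Longrightarrow> j \<in> A \<Longrightarrow> real (card {S\<in>?X. i \<in> S \<and> j \<in> S}) = c2 + (if i = j then c1 - c2 else 0)"
  proof -
    fix i j assume ij: "i \<in> A" "j \<in> A"
    show "real (card {S\<in>?X. i \<in> S \<and> j \<in> S}) = c2 + (if i = j then c1 - c2 else 0)"
    proof (cases "i = j")
      case True thus ?thesis using count1[OF A ij(1) b(1)] unfolding c1_def by simp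
    next
      case False thus ?thesis using count2[OF A ij False, of b] unfolding c2_def by simp
    qed
  qed
  have "(\<Sum>S\<in>?X. (norm (\<Sum>i\<in>S. d i))\<^sup>2) = (\<Sum>S\<in>?X. \<Sum>i\<in>S. \<Sum>j\<in>S. d i \<bullet> d j)"
    apply (simp add: power2_norm_eq_inner inner_sum_left inner_sum_right)
    apply (rule sum.cong[OF refl])
    apply (rule sum.swap)
    done
  also have "\<dots> = (\<Sum>i\<in>A. \<Sum>j\<in>A. real (card {S\<in>?X. i \<in> S \<and> j \<in> S}) * (d i \<bullet> d j))"
    by (rule sum_subsets_pairs[OF A(1)])
  also have "\<dots> = (\<Sum>i\<in>A. \<Sum>j\<in>A. c2 * (d i \<bullet> d j) + (if i = j then (c1 - c2) * (d i \<bullet> d j) else 0))"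
    using cnt by (intro sum.cong refl) (auto simp: distrib_right)
  also have "\<dots> = c2 * (norm (\<Sum>i\<in>A. d i))\<^sup>2 + (c1 - c2) * (\<Sum>i\<in>A. (norm (d i))\<^sup>2)"
    using A(1) by (simp add: sum.distrib power2_norm_eq_inner inner_sum_left inner_sum_right
        sum_distrib_left sum.delta) (rule sum.swap)
  finally have T: "(\<Sum>S\<in>?X. (norm (\<Sum>i\<in>S. d i))\<^sup>2) = c2 * (norm (\<Sum>i\<in>A. d i))\<^sup>2 + (c1 - c2) * (\<Sum>i\<in>A. (norm (d i))\<^sup>2)" .
  have r1: "real n * c1 = N * real b" using binom_rel1[of b n] b unfolding c1_def N_def by (simp add: mult.commute)
  have c2nn: "0 \<le> c2" unfolding c2_def by simp
  have r2: "(real n)\<^sup>2 * c2 \<le> N * (real b)\<^sup>2"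
  proof (cases "2 \<le> b")
    case False thus ?thesis unfolding c2_def N_def by simp
  next
    case True
    hence n2: "2 \<le> n" using b by simp
    have e1: "real (b - 1) * real ((n - 1) choose (b - 1)) = real (n - 1) * real ((n - 1 - 1) choose (b - 1 - 1))"
      by (rule binom_rel1) (use True in simp)
    have e2: "real (n - 1) * c2 * real n = real (b - 1) * N * real b"
    proof -
      have "real (n - 1) * c2 * real n = real (b - 1) * c1 * real n"
        using e1 True unfolding c1_def c2_def by (simp add: diff_diff_add numeral_2_eq_2)
      also have "\<dots> = real (b - 1) * N * real b" using r1 by (simp add: algebra_simps)
      finally show ?thesis .
    qed
    have nb: "real n * real (b - 1) \<le> real b * real (n - 1)"
      using b True n2 by (simp add: of_nat_diff algebra_simps)
    have "real (n - 1) * ((real n)\<^sup>2 * c2) = real n * (real (b - 1) * N * real b)"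
      using e2 by (simp add: power2_eq_square algebra_simps)
    also have "\<dots> = (real n * real (b - 1)) * (N * real b)" by (simp add: algebra_simps)
    also have "\<dots> \<le> (real b * real (n - 1)) * (N * real b)"
      by (rule mult_right_mono[OF nb]) (simp add: N_def)
    also have "\<dots> = real (n - 1) * (N * (real b)\<^sup>2)" by (simp add: power2_eq_square algebra_simps)
    finally show ?thesis using n2 by (simp add: mult_le_cancel_left)
  qed
  have s0: "0 \<le> (\<Sum>i\<in>A. (norm (d i))\<^sup>2)" by (simp add: sum_nonneg)
  have "(\<Sum>S\<in>?X. (norm (\<Sum>i\<in>S. d i))\<^sup>2) * (real n)\<^sup>2
      = ((real n)\<^sup>2 * c2) * (norm (\<Sum>i\<in>A. d i))\<^sup>2 + (real n * (real n * c1)) * (\<Sum>i\<in>A. (norm (d i))\<^sup>2)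
        - (real n)\<^sup>2 * c2 * (\<Sum>i\<in>A. (norm (d i))\<^sup>2)"
    unfolding T by (simp add: power2_eq_square algebra_simps)
  also have "\<dots> \<le> (N * (real b)\<^sup>2) * (norm (\<Sum>i\<in>A. d i))\<^sup>2 + (real n * (N * real b)) * (\<Sum>i\<in>A. (norm (d i))\<^sup>2)"
  proof -
    have h1: "((real n)\<^sup>2 * c2) * (norm (\<Sum>i\<in>A. d i))\<^sup>2 \<le> (N * (real b)\<^sup>2) * (norm (\<Sum>i\<in>A. d i))\<^sup>2"
      by (rule mult_right_mono[OF r2]) simp
    have h3: "0 \<le> (real n)\<^sup>2 * c2 * (\<Sum>i\<in>A. (norm (d i))\<^sup>2)" using c2nn s0 by simp
    show ?thesis using h1 h3 r1 by simp
  qed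
  finally show ?thesis unfolding N_def by (simp add: algebra_simps)
qed



lemma descent:
  fixes f :: "'a::real_inner \<Rightarrow> real" and gf :: "'a \<Rightarrow> 'a"
  assumes der: "\<And>z. (f has_derivative (\<lambda>h. gf z \<bullet> h)) (at z)"
    and lip: "\<And>z w. norm (gf z - gf w) \<le> L * norm (z - w)"
  shows "f y \<le> f x + gf x \<bullet> (y - x) + L / 2 * (norm (y - x))\<^sup>2"
proof -
  define d where "d = y - x"
  define phi where "phi = (\<lambda>t. f (x + t *\<^sub>R d) - t * (gf x \<bullet> d) - L / 2 * t\<^sup>2 * (norm d)\<^sup>2)"
  have "phi 1 \<le> phi 0"
  proof (rule DERIV_nonpos_imp_nonincreasing[of 0 1])
    fix t :: real assume t: "0 \<le> t" "t \<le> 1"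
    have d1: "((\<lambda>t. f (x + t *\<^sub>R d)) has_derivative (\<lambda>s. gf (x + t *\<^sub>R d) \<bullet> (s *\<^sub>R d))) (at t)"
      by (rule has_derivative_compose[of "\<lambda>t. x + t *\<^sub>R d" _ _ _ f, OF _ der])
         (auto intro!: derivative_eq_intros)
    have d2: "((\<lambda>t. f (x + t *\<^sub>R d)) has_real_derivative (gf (x + t *\<^sub>R d) \<bullet> d)) (at t)"
    proof -
      have "(\<lambda>s. gf (x + t *\<^sub>R d) \<bullet> (s *\<^sub>R d)) = (*) (gf (x + t *\<^sub>R d) \<bullet> d)"
        by (auto simp: fun_eq_iff)
      thus ?thesis using d1 unfolding has_field_derivative_def by simp
    qed
    have d3: "(phi has_real_derivative (gf (x + t *\<^sub>R d) \<bullet> d - gf x \<bullet> d - L * t * (norm d)\<^sup>2)) (at t)"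
      unfolding phi_def by (rule derivative_eq_intros d2 refl)+ (simp add: algebra_simps)
    have "gf (x + t *\<^sub>R d) \<bullet> d - gf x \<bullet> d = (gf (x + t *\<^sub>R d) - gf x) \<bullet> d" by (simp add: inner_diff_left)
    also have "\<dots> \<le> norm (gf (x + t *\<^sub>R d) - gf x) * norm d" by (rule norm_cauchy_schwarz)
    also have "\<dots> \<le> (L * norm (t *\<^sub>R d)) * norm d"
      by (rule mult_right_mono) (use lip[of "x + t *\<^sub>R d" x] in auto)
    also have "\<dots> = L * t * (norm d)\<^sup>2" using t by (simp add: power2_eq_square)
    finally have "gf (x + t *\<^sub>R d) \<bullet> d - gf x \<bullet> d - L * t * (norm d)\<^sup>2 \<le> 0" by simp
    thus "\<exists>y. (phi has_real_derivative y) (at t) \<and> y \<le> 0" using d3 by blast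
  qed simp
  thus ?thesis unfolding phi_def d_def by (simp add: algebra_simps)
qed



lemma avg_step:
  fixes v :: "'s \<Rightarrow> 'a::real_inner" and f :: "'a \<Rightarrow> real"
  assumes X: "finite X" "X \<noteq> {}"
    and mean: "(\<Sum>S\<in>X. v S) = real (card X) *\<^sub>R m"
    and var: "(\<Sum>S\<in>X. (norm (v S - m))\<^sup>2) \<le> real (card X) * V"
    and desc: "\<And>y. f y \<le> f x + gx \<bullet> (y - x) + L / 2 * (norm (y - x))\<^sup>2"
    and L: "0 \<le> L"
  shows "(\<Sum>S\<in>X. f (x - eta *\<^sub>R v S)) / real (card X)
         \<le> f x - eta * (gx \<bullet> m) + L * eta\<^sup>2 / 2 * ((norm m)\<^sup>2 + V)"
proof -
  let ?N = "real (card X)"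
  have N: "0 < ?N" using X by (simp add: card_gt_0_iff)
  have "(\<Sum>S\<in>X. f (x - eta *\<^sub>R v S)) \<le> (\<Sum>S\<in>X. f x - eta * (gx \<bullet> v S) + L * eta\<^sup>2 / 2 * (norm (v S))\<^sup>2)"
  proof (rule sum_mono)
    fix S
    have "f (x - eta *\<^sub>R v S) \<le> f x + gx \<bullet> (x - eta *\<^sub>R v S - x) + L / 2 * (norm (x - eta *\<^sub>R v S - x))\<^sup>2"
      by (rule desc)
    also have "\<dots> = f x - eta * (gx \<bullet> v S) + L * eta\<^sup>2 / 2 * (norm (v S))\<^sup>2"
      by (simp add: power2_eq_square algebra_simps)
    finally show "f (x - eta *\<^sub>R v S) \<le> f x - eta * (gx \<bullet> v S) + L * eta\<^sup>2 / 2 * (norm (v S))\<^sup>2" .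
  qed
  also have "\<dots> = ?N * f x - eta * (gx \<bullet> (\<Sum>S\<in>X. v S)) + L * eta\<^sup>2 / 2 * (\<Sum>S\<in>X. (norm (v S))\<^sup>2)"
    by (simp add: sum.distrib sum_subtractf sum_distrib_left inner_sum_right)
  also have "(\<Sum>S\<in>X. (norm (v S))\<^sup>2) = (\<Sum>S\<in>X. (norm (v S - m))\<^sup>2) + ?N * (norm m)\<^sup>2"
  proof -
    have "\<And>S. (norm (v S))\<^sup>2 = (norm (v S - m))\<^sup>2 + 2 * ((v S - m) \<bullet> m) + (norm m)\<^sup>2"
      by (simp add: power2_norm_eq_inner inner_diff_left inner_diff_right inner_commute)
    hence "(\<Sum>S\<in>X. (norm (v S))\<^sup>2) = (\<Sum>S\<in>X. (norm (v S - m))\<^sup>2) + 2 * ((\<Sum>S\<in>X. v S - m) \<bullet> m) + ?N * (norm m)\<^sup>2"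
      by (simp add: sum.distrib sum_distrib_left inner_sum_left)
    also have "(\<Sum>S\<in>X. v S - m) = 0" using mean by (simp add: sum_subtractf sum_constant_scaleR)
    finally show ?thesis by simp
  qed
  also have "?N * f x - eta * (gx \<bullet> (\<Sum>S\<in>X. v S)) + L * eta\<^sup>2 / 2 * ((\<Sum>S\<in>X. (norm (v S - m))\<^sup>2) + ?N * (norm m)\<^sup>2)
      \<le> ?N * f x - eta * (gx \<bullet> (\<Sum>S\<in>X. v S)) + L * eta\<^sup>2 / 2 * (?N * V + ?N * (norm m)\<^sup>2)"
    using var L by (intro add_left_mono mult_left_mono add_right_mono) auto
  also have "\<dots> = ?N * (f x - eta * (gx \<bullet> m) + L * eta\<^sup>2 / 2 * ((norm m)\<^sup>2 + V))"
    using mean by (simp add: algebra_simps)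
  finally show ?thesis using N by (simp add: divide_le_eq mult.commute)
qed



lemma norm_diff_sq:
  fixes a c :: "'b::real_inner"
  shows "(norm (a - c))\<^sup>2 = (norm a)\<^sup>2 - 2 * (a \<bullet> c) + (norm c)\<^sup>2"
  by (simp add: power2_norm_eq_inner inner_diff_left inner_diff_right inner_commute)

lemma subsets_var2:
  fixes d :: "nat \<Rightarrow> 'b::real_inner"
  assumes A: "finite A" "card A = n" and b: "1 \<le> b" "b \<le> n"
  defines "X \<equiv> {S. S \<subseteq> A \<and> card S = b}"
  defines "mu \<equiv> (1 / real n) *\<^sub>R (\<Sum>i\<in>A. d i)"
  shows "(\<Sum>S\<in>X. (1 / real b) *\<^sub>R (\<Sum>i\<in>S. d i)) = real (card X) *\<^sub>R mu"
    and "(\<Sum>S\<in>X. (norm ((1 / real b) *\<^sub>R (\<Sum>i\<in>S. d i) - mu))\<^sup>2)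
           \<le> real (card X) / (real b * real n) * (\<Sum>i\<in>A. (norm (d i))\<^sup>2)"
proof -
  have cX: "card X = n choose b" unfolding X_def using A by (simp add: n_subsets)
  have n0: "0 < real n" "0 < real b" using b by auto
  have r1: "real b * real (n choose b) = real n * real ((n - 1) choose (b - 1))" by (rule binom_rel1) (use b in simp)
  have M: "(\<Sum>S\<in>X. (1 / real b) *\<^sub>R (\<Sum>i\<in>S. d i)) = real (card X) *\<^sub>R mu"
  proof -
    have "(\<Sum>S\<in>X. (1 / real b) *\<^sub>R (\<Sum>i\<in>S. d i)) = (1 / real b) *\<^sub>R (\<Sum>S\<in>X. \<Sum>i\<in>S. d i)"
      by (simp add: scaleR_sum_right)
    also have "\<dots> = (1 / real b) *\<^sub>R (real ((n - 1) choose (b - 1)) *\<^sub>R (\<Sum>i\<in>A. d i))"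
      unfolding X_def by (subst subsets_mean[OF A b]) simp
    also have "\<dots> = ((real ((n - 1) choose (b - 1)) / real b)) *\<^sub>R (\<Sum>i\<in>A. d i)" by simp
    also have "real ((n - 1) choose (b - 1)) / real b = real (n choose b) / real n"
      using r1 n0 by (simp add: field_simps)
    also have "(real (n choose b) / real n) *\<^sub>R (\<Sum>i\<in>A. d i) = real (card X) *\<^sub>R mu"
      unfolding mu_def cX by simp
    finally show ?thesis .
  qed
  show "(\<Sum>S\<in>X. (1 / real b) *\<^sub>R (\<Sum>i\<in>S. d i)) = real (card X) *\<^sub>R mu" by (rule M)
  let ?xi = "\<lambda>S. (1 / real b) *\<^sub>R (\<Sum>i\<in>S. d i)"
  have "\<And>S. (norm (?xi S - mu))\<^sup>2 = (norm (?xi S))\<^sup>2 - 2 * (?xi S \<bullet> mu) + (norm mu)\<^sup>2"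
    by (rule norm_diff_sq)
  hence "(\<Sum>S\<in>X. (norm (?xi S - mu))\<^sup>2) = (\<Sum>S\<in>X. (norm (?xi S))\<^sup>2) - 2 * ((\<Sum>S\<in>X. ?xi S) \<bullet> mu) + real (card X) * (norm mu)\<^sup>2"
    by (simp add: sum.distrib sum_subtractf sum_distrib_left inner_sum_left del: scaleR_sum_right)
  also have "(\<Sum>S\<in>X. ?xi S) \<bullet> mu = real (card X) * (norm mu)\<^sup>2"
    using M by (simp add: power2_norm_eq_inner)
  also have "(\<Sum>S\<in>X. (norm (?xi S))\<^sup>2) = (\<Sum>S\<in>X. (norm (\<Sum>i\<in>S. d i))\<^sup>2) / (real b)\<^sup>2"
    by (simp add: power2_eq_square sum_divide_distrib)
  finally have E1: "(\<Sum>S\<in>X. (norm (?xi S - mu))\<^sup>2) = (\<Sum>S\<in>X. (norm (\<Sum>i\<in>S. d i))\<^sup>2) / (real b)\<^sup>2 - real (card X) * (norm mu)\<^sup>2"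
    by simp
  have V: "(\<Sum>S\<in>X. (norm (\<Sum>i\<in>S. d i))\<^sup>2) * (real n)\<^sup>2
       \<le> real (card X) * (real b)\<^sup>2 * (norm (\<Sum>i\<in>A. d i))\<^sup>2
         + real (card X) * real b * real n * (\<Sum>i\<in>A. (norm (d i))\<^sup>2)"
    unfolding X_def cX[unfolded X_def] by (rule subsets_var[OF A b])
  have nm: "(norm mu)\<^sup>2 = (norm (\<Sum>i\<in>A. d i))\<^sup>2 / (real n)\<^sup>2"
    unfolding mu_def using n0 by (simp add: power2_eq_square)
  have "(\<Sum>S\<in>X. (norm (\<Sum>i\<in>S. d i))\<^sup>2) / (real b)\<^sup>2
      \<le> real (card X) * (norm (\<Sum>i\<in>A. d i))\<^sup>2 / (real n)\<^sup>2 + real (card X) / (real b * real n) * (\<Sum>i\<in>A. (norm (d i))\<^sup>2)"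
    using V n0 by (simp add: field_simps power2_eq_square)
  thus "(\<Sum>S\<in>X. (norm (?xi S - mu))\<^sup>2) \<le> real (card X) / (real b * real n) * (\<Sum>i\<in>A. (norm (d i))\<^sup>2)"
    unfolding E1 nm by simp
qed



lemma subsets_of_size_props:
  assumes "b \<le> n"
  shows "finite (subsets_of_size n b)" "subsets_of_size n b \<noteq> {}"
proof -
  show "finite (subsets_of_size n b)" unfolding subsets_of_size_def
    by (rule finite_subset[of _ "Pow {1..n}"]) auto
  have "{1..b} \<in> subsets_of_size n b" unfolding subsets_of_size_def using assms by auto
  thus "subsets_of_size n b \<noteq> {}" by auto
qed

lemma parallelogram_sq:
  fixes a c :: "'b::real_inner"
  shows "(norm (a + c))\<^sup>2 + (norm (a - c))\<^sup>2 = 2 * (norm a)\<^sup>2 + 2 * (norm c)\<^sup>2"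
  by (simp add: power2_norm_eq_inner inner_add_left inner_add_right inner_diff_left inner_diff_right inner_commute)

lemma step_ineq:
  fixes G :: "nat \<Rightarrow> 'a::real_inner \<Rightarrow> 'a" and f :: "'a \<Rightarrow> real" and x0 g x :: 'a and lam eta L :: real
  assumes b: "1 \<le> b" "b \<le> n"
    and smooth: "\<And>i x y. i \<in> {1..n} \<Longrightarrow> norm (G i x - G i y) \<le> L * norm (x - y)"
    and desc: "\<And>y. f y \<le> f x + gradB G {1..n} x \<bullet> (y - x) + L / 2 * (norm (y - x))\<^sup>2"
    and L: "0 \<le> L"
  defines "gf \<equiv> gradB G {1..n}"
  defines "e \<equiv> lam *\<^sub>R g - (1 - lam) *\<^sub>R gf x0"
  shows "integral\<^sup>L (measure_pmf (svrg_step n G lam eta b g x0 x)) f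
    \<le> f x - (eta * (1 - lam) * (1 - (1 - lam) * L * eta) * (norm (gf x))\<^sup>2 + eta * (e \<bullet> gf x)
             - L * eta\<^sup>2 * (norm e)\<^sup>2 - (1 - lam)\<^sup>2 * eta\<^sup>2 * L ^ 3 / (2 * real b) * (norm (x - x0))\<^sup>2)"
proof -
  define X where "X = subsets_of_size n b"
  have fX: "finite X" "X \<noteq> {}" unfolding X_def using subsets_of_size_props b by auto
  define d where "d = (\<lambda>i. G i x - G i x0)"
  define mu where "mu = (1 / real n) *\<^sub>R (\<Sum>i\<in>{1..n}. d i)"
  define v where "v = (\<lambda>S. (1 - lam) *\<^sub>R (gradB G S x - gradB G S x0) + lam *\<^sub>R g)"
  define m where "m = (1 - lam) *\<^sub>R mu + lam *\<^sub>R g"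
  define V where "V = (1 - lam)\<^sup>2 * L\<^sup>2 * (norm (x - x0))\<^sup>2 / real b"
  have xi: "\<And>S. S \<in> X \<Longrightarrow> gradB G S x - gradB G S x0 = (1 / real b) *\<^sub>R (\<Sum>i\<in>S. d i)"
    unfolding X_def subsets_of_size_def gradB_def d_def by (auto simp: sum_subtractf scaleR_diff_right)
  have XA: "X = {S. S \<subseteq> {1..n} \<and> card S = b}" unfolding X_def subsets_of_size_def by simp
  have cA: "card {1..n} = n" by simp
  note SV = subsets_var2[OF finite_atLeastAtMost cA b, of d, folded XA mu_def]
  have mean: "(\<Sum>S\<in>X. v S) = real (card X) *\<^sub>R m"
  proof -
    have "(\<Sum>S\<in>X. v S) = (\<Sum>S\<in>X. (1 - lam) *\<^sub>R ((1 / real b) *\<^sub>R (\<Sum>i\<in>S. d i)) + lam *\<^sub>R g)"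
      unfolding v_def using xi by (intro sum.cong refl) auto
    also have "\<dots> = (1 - lam) *\<^sub>R (\<Sum>S\<in>X. (1 / real b) *\<^sub>R (\<Sum>i\<in>S. d i)) + real (card X) *\<^sub>R (lam *\<^sub>R g)"
      by (simp only: sum.distrib scaleR_sum_right[symmetric] sum_constant_scaleR) (simp add: scaleR_scaleR mult.commute)
    also have "\<dots> = real (card X) *\<^sub>R m" unfolding SV(1) m_def by (simp add: scaleR_add_right)
    finally show ?thesis .
  qed
  have dn: "(\<Sum>i\<in>{1..n}. (norm (d i))\<^sup>2) \<le> real n * (L\<^sup>2 * (norm (x - x0))\<^sup>2)"
  proof -
    have "(\<Sum>i\<in>{1..n}. (norm (d i))\<^sup>2) \<le> (\<Sum>i\<in>{1..n}. L\<^sup>2 * (norm (x - x0))\<^sup>2)"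
    proof (rule sum_mono)
      fix i assume i: "i \<in> {1..n}"
      have "norm (d i) \<le> L * norm (x - x0)" unfolding d_def by (rule smooth[OF i])
      hence "(norm (d i))\<^sup>2 \<le> (L * norm (x - x0))\<^sup>2" by (rule power_mono) simp
      thus "(norm (d i))\<^sup>2 \<le> L\<^sup>2 * (norm (x - x0))\<^sup>2" by (simp add: power_mult_distrib)
    qed
    thus ?thesis by simp
  qed
  have var: "(\<Sum>S\<in>X. (norm (v S - m))\<^sup>2) \<le> real (card X) * V"
  proof -
    have "(\<Sum>S\<in>X. (norm (v S - m))\<^sup>2) = (\<Sum>S\<in>X. (1 - lam)\<^sup>2 * (norm ((1 / real b) *\<^sub>R (\<Sum>i\<in>S. d i) - mu))\<^sup>2)"
    proof (rule sum.cong[OF refl])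
      fix S assume S: "S \<in> X"
      have "v S - m = (1 - lam) *\<^sub>R ((1 / real b) *\<^sub>R (\<Sum>i\<in>S. d i) - mu)"
        unfolding v_def m_def xi[OF S] by (simp add: algebra_simps)
      thus "(norm (v S - m))\<^sup>2 = (1 - lam)\<^sup>2 * (norm ((1 / real b) *\<^sub>R (\<Sum>i\<in>S. d i) - mu))\<^sup>2"
        by (simp add: power_mult_distrib)
    qed
    also have "\<dots> = (1 - lam)\<^sup>2 * (\<Sum>S\<in>X. (norm ((1 / real b) *\<^sub>R (\<Sum>i\<in>S. d i) - mu))\<^sup>2)"
      by (simp add: sum_distrib_left)
    also have "\<dots> \<le> (1 - lam)\<^sup>2 * (real (card X) / (real b * real n) * (\<Sum>i\<in>{1..n}. (norm (d i))\<^sup>2))"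
      by (rule mult_left_mono[OF SV(2)]) simp
    also have "\<dots> \<le> (1 - lam)\<^sup>2 * (real (card X) / (real b * real n) * (real n * (L\<^sup>2 * (norm (x - x0))\<^sup>2)))"
      by (intro mult_left_mono dn) auto
    also have "\<dots> = real (card X) * V" unfolding V_def using b by (simp add: field_simps)
    finally show ?thesis .
  qed
  have AS: "(\<Sum>S\<in>X. f (x - eta *\<^sub>R v S)) / real (card X)
         \<le> f x - eta * (gf x \<bullet> m) + L * eta\<^sup>2 / 2 * ((norm m)\<^sup>2 + V)"
    by (rule avg_step[OF fX mean var _ L]) (use desc in \<open>simp add: gf_def\<close>)
  have int: "integral\<^sup>L (measure_pmf (svrg_step n G lam eta b g x0 x)) f = (\<Sum>S\<in>X. f (x - eta *\<^sub>R v S)) / real (card X)"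
    unfolding svrg_step_def v_def X_def using fX[unfolded X_def] by (simp add: integral_pmf_of_set)
  have mu_eq: "mu = gf x - gf x0"
    unfolding mu_def gf_def gradB_def d_def by (simp add: sum_subtractf scaleR_diff_right)
  have m_eq: "m = (1 - lam) *\<^sub>R gf x + e" unfolding m_def mu_eq e_def by (simp add: algebra_simps)
  have gm: "gf x \<bullet> m = (1 - lam) * (norm (gf x))\<^sup>2 + e \<bullet> gf x"
    unfolding m_eq by (simp add: inner_add_right power2_norm_eq_inner inner_commute)
  have nm: "(norm m)\<^sup>2 \<le> 2 * (1 - lam)\<^sup>2 * (norm (gf x))\<^sup>2 + 2 * (norm e)\<^sup>2"
  proof -
    have "(norm m)\<^sup>2 + (norm ((1 - lam) *\<^sub>R gf x - e))\<^sup>2 = 2 * (norm ((1 - lam) *\<^sub>R gf x))\<^sup>2 + 2 * (norm e)\<^sup>2"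
      unfolding m_eq by (rule parallelogram_sq)
    moreover have "(norm ((1 - lam) *\<^sub>R gf x))\<^sup>2 = (1 - lam)\<^sup>2 * (norm (gf x))\<^sup>2" by (simp add: power_mult_distrib)
    moreover have "0 \<le> (norm ((1 - lam) *\<^sub>R gf x - e))\<^sup>2" by simp
    ultimately show ?thesis by linarith
  qed
  have "L * eta\<^sup>2 / 2 * ((norm m)\<^sup>2 + V) \<le> L * eta\<^sup>2 / 2 * (2 * (1 - lam)\<^sup>2 * (norm (gf x))\<^sup>2 + 2 * (norm e)\<^sup>2 + V)"
    using nm L by (intro mult_left_mono) auto
  hence "integral\<^sup>L (measure_pmf (svrg_step n G lam eta b g x0 x)) f
     \<le> f x - eta * ((1 - lam) * (norm (gf x))\<^sup>2 + e \<bullet> gf x) + L * eta\<^sup>2 / 2 * (2 * (1 - lam)\<^sup>2 * (norm (gf x))\<^sup>2 + 2 * (norm e)\<^sup>2 + V)"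
    using AS[unfolded gm] int by linarith
  also have "\<dots> = f x - (eta * (1 - lam) * (1 - (1 - lam) * L * eta) * (norm (gf x))\<^sup>2 + eta * (e \<bullet> gf x)
             - L * eta\<^sup>2 * (norm e)\<^sup>2 - (1 - lam)\<^sup>2 * eta\<^sup>2 * L ^ 3 / (2 * real b) * (norm (x - x0))\<^sup>2)"
    unfolding V_def using b by (simp add: field_simps power2_eq_square power3_eq_cube)
  finally show ?thesis .
qed



lemma inner_Suc_last:
  "svrg_inner n G lam eta b g x0 (Suc k) x = bind_pmf (svrg_inner n G lam eta b g x0 k x) (svrg_step n G lam eta b g x0)"
proof (induction k arbitrary: x)
  case 0
  have "svrg_inner n G lam eta b g x0 0 = return_pmf" by (rule ext) simp
  thus ?case by (simp add: bind_return_pmf bind_return_pmf')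
next
  case (Suc k)
  have "svrg_inner n G lam eta b g x0 (Suc (Suc k)) x
      = bind_pmf (svrg_step n G lam eta b g x0 x) (\<lambda>y. bind_pmf (svrg_inner n G lam eta b g x0 k y) (svrg_step n G lam eta b g x0))"
  proof -
    have e: "svrg_inner n G lam eta b g x0 (Suc k) = (\<lambda>y. bind_pmf (svrg_inner n G lam eta b g x0 k y) (svrg_step n G lam eta b g x0))"
      by (rule ext) (rule Suc.IH)
    show ?thesis by (simp only: svrg_inner.simps(2) e)
  qed
  also have "\<dots> = bind_pmf (svrg_inner n G lam eta b g x0 (Suc k) x) (svrg_step n G lam eta b g x0)"
    by (simp add: bind_assoc_pmf)
  finally show ?case .
qed

lemma finite_inner:
  assumes "b \<le> n"
  shows "finite (set_pmf (svrg_inner n G lam eta b g x0 k x))"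
proof (induction k arbitrary: x)
  case 0 thus ?case by simp
next
  case (Suc k)
  have fs: "finite (set_pmf (svrg_step n G lam eta b g x0 y))" for y
    unfolding svrg_step_def using subsets_of_size_props[OF assms] by simp
  show ?case using Suc fs by (simp add: set_bind_pmf)
qed

lemma integral_nonpos_pmf:
  fixes f :: "'b \<Rightarrow> real"
  assumes "\<And>x. x \<in> set_pmf M \<Longrightarrow> f x \<le> 0"
  shows "integral\<^sup>L (measure_pmf M) f \<le> 0"
proof -
  have "0 \<le> integral\<^sup>L (measure_pmf M) (\<lambda>x. - f x)"
    by (rule integral_nonneg_AE) (use assms in \<open>auto simp: AE_measure_pmf_iff\<close>)
  thus ?thesis by simp
qed

lemma descend:
  fixes g :: "'a \<times> nat set \<times> 'a \<Rightarrow> real"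
  assumes int: "integrable (measure_pmf (bind_pmf P0 (\<lambda>x0. map_pmf (\<lambda>(I, x). (x0, I, x))
        (bind_pmf U (\<lambda>I. bind_pmf Geo (\<lambda>N. map_pmf (\<lambda>x. (I, x)) (Q x0 I N))))))) g"
  shows "\<forall>x0\<in>set_pmf P0. \<forall>I\<in>set_pmf U. integrable (measure_pmf Geo) (\<lambda>N. integral\<^sup>L (Q x0 I N) (\<lambda>x. g (x0, I, x)))"
    and "(\<forall>x0\<in>set_pmf P0. \<forall>I\<in>set_pmf U. (\<integral>N. integral\<^sup>L (Q x0 I N) (\<lambda>x. g (x0, I, x)) \<partial>Geo) \<le> 0)
         \<Longrightarrow> integral\<^sup>L (bind_pmf P0 (\<lambda>x0. map_pmf (\<lambda>(I, x). (x0, I, x))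
        (bind_pmf U (\<lambda>I. bind_pmf Geo (\<lambda>N. map_pmf (\<lambda>x. (I, x)) (Q x0 I N)))))) g \<le> 0"
proof -
  define E where "E = (\<lambda>x0. bind_pmf U (\<lambda>I. bind_pmf Geo (\<lambda>N. map_pmf (\<lambda>x. (I, x)) (Q x0 I N))))"
  define g1 where "g1 = (\<lambda>x0 (I, x). g (x0, I, x))"
  have L1: "(\<forall>x0\<in>set_pmf P0. integrable (measure_pmf (map_pmf (\<lambda>(I, x). (x0, I, x)) (E x0))) g)
       \<and> integrable (measure_pmf P0) (\<lambda>x0. integral\<^sup>L (map_pmf (\<lambda>(I, x). (x0, I, x)) (E x0)) g)
       \<and> integral\<^sup>L (bind_pmf P0 (\<lambda>x0. map_pmf (\<lambda>(I, x). (x0, I, x)) (E x0))) g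
          = (\<integral>x0. integral\<^sup>L (map_pmf (\<lambda>(I, x). (x0, I, x)) (E x0)) g \<partial>P0)"
    by (rule bind_pmf_integral) (use int in \<open>simp add: E_def\<close>)
  have m1: "\<And>x0. integral\<^sup>L (map_pmf (\<lambda>(I, x). (x0, I, x)) (E x0)) g = integral\<^sup>L (E x0) (g1 x0)"
    unfolding g1_def by (simp add: case_prod_beta')
  have m1i: "\<And>x0. integrable (measure_pmf (map_pmf (\<lambda>(I, x). (x0, I, x)) (E x0))) g = integrable (E x0) (g1 x0)"
    unfolding g1_def by (simp add: case_prod_beta')
  have L2: "\<And>x0. x0 \<in> set_pmf P0 \<Longrightarrow>
      (\<forall>I\<in>set_pmf U. integrable (measure_pmf (bind_pmf Geo (\<lambda>N. map_pmf (\<lambda>x. (I, x)) (Q x0 I N)))) (g1 x0))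
      \<and> integrable (measure_pmf U) (\<lambda>I. integral\<^sup>L (bind_pmf Geo (\<lambda>N. map_pmf (\<lambda>x. (I, x)) (Q x0 I N))) (g1 x0))
      \<and> integral\<^sup>L (E x0) (g1 x0) = (\<integral>I. integral\<^sup>L (bind_pmf Geo (\<lambda>N. map_pmf (\<lambda>x. (I, x)) (Q x0 I N))) (g1 x0) \<partial>U)"
    unfolding E_def by (rule bind_pmf_integral) (use L1 m1i in \<open>auto simp: E_def\<close>)
  have m2: "\<And>x0 I N. integral\<^sup>L (map_pmf (\<lambda>x. (I, x)) (Q x0 I N)) (g1 x0) = integral\<^sup>L (Q x0 I N) (\<lambda>x. g (x0, I, x))"
    unfolding g1_def by simp
  have L3: "\<And>x0 I. x0 \<in> set_pmf P0 \<Longrightarrow> I \<in> set_pmf U \<Longrightarrow>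
      (\<forall>N\<in>set_pmf Geo. integrable (measure_pmf (map_pmf (\<lambda>x. (I, x)) (Q x0 I N))) (g1 x0))
      \<and> integrable (measure_pmf Geo) (\<lambda>N. integral\<^sup>L (Q x0 I N) (\<lambda>x. g (x0, I, x)))
      \<and> integral\<^sup>L (bind_pmf Geo (\<lambda>N. map_pmf (\<lambda>x. (I, x)) (Q x0 I N))) (g1 x0)
          = (\<integral>N. integral\<^sup>L (Q x0 I N) (\<lambda>x. g (x0, I, x)) \<partial>Geo)"
    unfolding m2[symmetric] by (rule bind_pmf_integral) (use L2 in auto)
  show "\<forall>x0\<in>set_pmf P0. \<forall>I\<in>set_pmf U. integrable (measure_pmf Geo) (\<lambda>N. integral\<^sup>L (Q x0 I N) (\<lambda>x. g (x0, I, x)))"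
    using L3 by blast
  assume H: "\<forall>x0\<in>set_pmf P0. \<forall>I\<in>set_pmf U. (\<integral>N. integral\<^sup>L (Q x0 I N) (\<lambda>x. g (x0, I, x)) \<partial>Geo) \<le> 0"
  have "\<And>x0. x0 \<in> set_pmf P0 \<Longrightarrow> integral\<^sup>L (E x0) (g1 x0) \<le> 0"
  proof -
    fix x0 assume x0: "x0 \<in> set_pmf P0"
    have "(\<integral>I. integral\<^sup>L (bind_pmf Geo (\<lambda>N. map_pmf (\<lambda>x. (I, x)) (Q x0 I N))) (g1 x0) \<partial>U) \<le> 0"
      using L3[OF x0] H x0 by (rule_tac integral_nonpos_pmf) auto
    thus "integral\<^sup>L (E x0) (g1 x0) \<le> 0" using L2[OF x0] by simp
  qed
  hence "(\<integral>x0. integral\<^sup>L (map_pmf (\<lambda>(I, x). (x0, I, x)) (E x0)) g \<partial>P0) \<le> 0"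
    unfolding m1 by (rule integral_nonpos_pmf) auto
  thus "integral\<^sup>L (bind_pmf P0 (\<lambda>x0. map_pmf (\<lambda>(I, x). (x0, I, x))
        (bind_pmf U (\<lambda>I. bind_pmf Geo (\<lambda>N. map_pmf (\<lambda>x. (I, x)) (Q x0 I N)))))) g \<le> 0"
    using L1 unfolding E_def by simp
qed



lemma integral_return_pmf_real: "integral\<^sup>L (measure_pmf (return_pmf x0)) (f::'a\<Rightarrow>real) = f x0"
  by (subst integral_measure_pmf_real[of "{x0}"]) auto

theorem lemmaB8:
  fixes n B b :: nat
    and F :: "nat \<Rightarrow> 'a::euclidean_space \<Rightarrow> real"
    and G :: "nat \<Rightarrow> 'a \<Rightarrow> 'a"
    and L lam eta :: real
    and P0 :: "'a pmf"
  defines "f \<equiv> (\<lambda>x. (1 / real n) * (\<Sum>i=1..n. F i x))"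
    and "gradf \<equiv> gradB G {1..n}"
    and "P \<equiv> measure_pmf (svrg_joint n G lam eta B b P0)"
    and "e \<equiv> (\<lambda>x0 I. lam *\<^sub>R gradB G I x0 - (1 - lam) *\<^sub>R gradB G {1..n} x0)"
  assumes n: "1 \<le> n"
    and B: "1 \<le> B" "B \<le> n"
    and b: "1 \<le> b" "b \<le> n"
    and grad: "\<And>i x. i \<in> {1..n} \<Longrightarrow> (F i has_derivative (\<lambda>h. G i x \<bullet> h)) (at x)"
    and smooth: "\<And>i x y. i \<in> {1..n} \<Longrightarrow> norm (G i x - G i y) \<le> L * norm (x - y)"
    and lam: "0 < lam" "lam < 1"
    and eta: "0 < eta" "eta * L < 1"
    and int1: "integrable P (\<lambda>(x0, I, x). f x0)"
    and int2: "integrable P (\<lambda>(x0, I, x). f x)"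
    and int3: "integrable P (\<lambda>(x0, I, x). (norm (gradf x))\<^sup>2)"
    and int4: "integrable P (\<lambda>(x0, I, x). e x0 I \<bullet> gradf x)"
    and int5: "integrable P (\<lambda>(x0, I, x). (norm (x - x0))\<^sup>2)"
    and int6: "integrable P (\<lambda>(x0, I, x). (norm (e x0 I))\<^sup>2)"
  shows "(1 - lam) * (1 - (1 - lam) * L * eta) * eta * real B
           * (\<integral>(x0, I, x). (norm (gradf x))\<^sup>2 \<partial>P)
         + eta * real B * (\<integral>(x0, I, x). e x0 I \<bullet> gradf x \<partial>P)
         \<le> real b * (\<integral>(x0, I, x). f x0 - f x \<partial>P)
           + (1 - lam)\<^sup>2 * eta\<^sup>2 * real B * L ^ 3 / (2 * real b)
             * (\<integral>(x0, I, x). (norm (x - x0))\<^sup>2 \<partial>P)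
           + L * eta\<^sup>2 * real B * (\<integral>(x0, I, x). (norm (e x0 I))\<^sup>2 \<partial>P)"
proof -
  have L0: "0 \<le> L"
  proof -
    obtain u :: 'a where u: "u \<in> Basis" using nonempty_Basis by blast
    have "norm (G 1 0 - G 1 u) \<le> L * norm (0 - u)" using smooth[of 1 0 u] n by auto
    hence "0 \<le> L * norm u" by (metis norm_ge_zero order_trans norm_minus_cancel diff_0)
    thus ?thesis using u by (simp add: zero_le_mult_iff)
  qed
  have cardn: "card {1..n} = n" by simp
  have gf_der: "\<And>z. (f has_derivative (\<lambda>h. gradf z \<bullet> h)) (at z)"
  proof -
    fix z
    have "((\<lambda>x. (1 / real n) * (\<Sum>i=1..n. F i x)) has_derivative (\<lambda>h. (1 / real n) * (\<Sum>i=1..n. G i z \<bullet> h))) (at z)"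
      by (intro has_derivative_mult_right has_derivative_sum grad) auto
    moreover have "(\<lambda>h. (1 / real n) * (\<Sum>i=1..n. G i z \<bullet> h)) = (\<lambda>h. gradf z \<bullet> h)"
      unfolding gradf_def gradB_def by (simp add: fun_eq_iff inner_sum_left)
    ultimately show "(f has_derivative (\<lambda>h. gradf z \<bullet> h)) (at z)" unfolding f_def by simp
  qed
  have gf_lip: "\<And>z w. norm (gradf z - gradf w) \<le> L * norm (z - w)"
  proof -
    fix z w
    have "gradf z - gradf w = (1 / real n) *\<^sub>R (\<Sum>i=1..n. G i z - G i w)"
      unfolding gradf_def gradB_def by (simp add: sum_subtractf scaleR_diff_right)
    hence "norm (gradf z - gradf w) = (1 / real n) * norm (\<Sum>i=1..n. G i z - G i w)" by simp
    also have "\<dots> \<le> (1 / real n) * (\<Sum>i=1..n. norm (G i z - G i w))"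
      by (intro mult_left_mono norm_sum) auto
    also have "\<dots> \<le> (1 / real n) * (\<Sum>i=1..n. L * norm (z - w))"
      by (intro mult_left_mono sum_mono smooth) auto
    also have "\<dots> = L * norm (z - w)" using n by simp
    finally show "norm (gradf z - gradf w) \<le> L * norm (z - w)" .
  qed
  have desc: "\<And>x y. f y \<le> f x + gradf x \<bullet> (y - x) + L / 2 * (norm (y - x))\<^sup>2"
    by (rule descent[OF gf_der gf_lip])
  define p where "p = real b / (real B + real b)"
  have p: "0 < p" "p < 1" using B b unfolding p_def by auto
  have p1: "1 - p = real B / (real B + real b)" using B b unfolding p_def by (simp add: field_simps)
  define Q where "Q = (\<lambda>x0 I N. svrg_inner n G lam eta b (gradB G I x0) x0 N x0)"
  define U where "U = pmf_of_set (subsets_of_size n B)"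
  define Geo where "Geo = geometric_pmf p"
  have PP: "P = measure_pmf (bind_pmf P0 (\<lambda>x0. map_pmf (\<lambda>(I, x). (x0, I, x))
        (bind_pmf U (\<lambda>I. bind_pmf Geo (\<lambda>N. map_pmf (\<lambda>x. (I, x)) (Q x0 I N))))))"
    unfolding P_def svrg_joint_def svrg_epoch_def Q_def U_def Geo_def p_def by (rule refl)
  note DS = descend[of P0 U Geo Q]
  define k1 where "k1 = (\<lambda>(x0::'a, I::nat set, x::'a). f x0)"
  define k2 where "k2 = (\<lambda>(x0::'a, I::nat set, x::'a). f x)"
  define k3 where "k3 = (\<lambda>(x0::'a, I::nat set, x::'a). (norm (gradf x))\<^sup>2)"
  define k4 where "k4 = (\<lambda>(x0::'a, I::nat set, x::'a). e x0 I \<bullet> gradf x)"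
  define k5 where "k5 = (\<lambda>(x0::'a, I::nat set, x::'a). (norm (x - x0))\<^sup>2)"
  define k6 where "k6 = (\<lambda>(x0::'a, I::nat set, x::'a). (norm (e x0 I))\<^sup>2)"
  define k12 where "k12 = (\<lambda>(x0::'a, I::nat set, x::'a). f x0 - f x)"
  define al where "al = eta * (1 - lam) * (1 - (1 - lam) * L * eta)"
  define c where "c = (1 - lam)\<^sup>2 * eta\<^sup>2 * L ^ 3 / (2 * real b)"
  define Psi where "Psi = (\<lambda>y. real B * (al * k3 y + eta * k4 y - L * eta\<^sup>2 * k6 y - c * k5 y) - real b * (k1 y - k2 y))"
  have i1: "integrable P k1" using int1 unfolding k1_def .
  have i2: "integrable P k2" using int2 unfolding k2_def .
  have i3: "integrable P k3" using int3 unfolding k3_def .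
  have i4: "integrable P k4" using int4 unfolding k4_def .
  have i5: "integrable P k5" using int5 unfolding k5_def .
  have i6: "integrable P k6" using int6 unfolding k6_def .
  have k12e: "k12 = (\<lambda>y. k1 y - k2 y)" unfolding k12_def k1_def k2_def by (auto simp: fun_eq_iff)
  have iPsi: "integrable P Psi" unfolding Psi_def using i1 i2 i3 i4 i5 i6 by auto
  have intPsi: "integral\<^sup>L P Psi = real B * (al * integral\<^sup>L P k3 + eta * integral\<^sup>L P k4 - L * eta\<^sup>2 * integral\<^sup>L P k6 - c * integral\<^sup>L P k5)
      - real b * integral\<^sup>L P k12"
    unfolding Psi_def k12e using i1 i2 i3 i4 i5 i6 by simp
  have "integral\<^sup>L P Psi \<le> 0"
  proof -
    have main: "\<forall>x0\<in>set_pmf P0. \<forall>I\<in>set_pmf U. (\<integral>N. integral\<^sup>L (Q x0 I N) (\<lambda>x. Psi (x0, I, x)) \<partial>Geo) \<le> 0"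
    proof (intro ballI)
      fix x0 I assume x0: "x0 \<in> set_pmf P0" and I: "I \<in> set_pmf U"
      define ee where "ee = e x0 I"
      define hx where "hx = (\<lambda>x. al * (norm (gradf x))\<^sup>2 + eta * (ee \<bullet> gradf x) - L * eta\<^sup>2 * (norm ee)\<^sup>2 - c * (norm (x - x0))\<^sup>2)"
      define a where "a = (\<lambda>N. integral\<^sup>L (Q x0 I N) f)"
      define cc where "cc = (\<lambda>N. integral\<^sup>L (Q x0 I N) hx)"
      have finQ: "\<And>N. finite (set_pmf (Q x0 I N))" unfolding Q_def using finite_inner b by blast
      have iQ: "\<And>N h. integrable (measure_pmf (Q x0 I N)) (h :: 'a \<Rightarrow> real)"
        using finQ by (rule integrable_measure_pmf_finite)
      have ia: "integrable (measure_pmf Geo) a"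
        using DS(1)[OF i2[unfolded PP]] x0 I unfolding a_def k2_def by simp
      have j3: "integrable (measure_pmf Geo) (\<lambda>N. integral\<^sup>L (Q x0 I N) (\<lambda>x. (norm (gradf x))\<^sup>2))"
        using DS(1)[OF i3[unfolded PP]] x0 I unfolding k3_def by simp
      have j4: "integrable (measure_pmf Geo) (\<lambda>N. integral\<^sup>L (Q x0 I N) (\<lambda>x. ee \<bullet> gradf x))"
        using DS(1)[OF i4[unfolded PP]] x0 I unfolding k4_def ee_def by simp
      have j5: "integrable (measure_pmf Geo) (\<lambda>N. integral\<^sup>L (Q x0 I N) (\<lambda>x. (norm (x - x0))\<^sup>2))"
        using DS(1)[OF i5[unfolded PP]] x0 I unfolding k5_def by simp
      have cce: "cc = (\<lambda>N. al * integral\<^sup>L (Q x0 I N) (\<lambda>x. (norm (gradf x))\<^sup>2) + eta * integral\<^sup>L (Q x0 I N) (\<lambda>x. ee \<bullet> gradf x)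
              - L * eta\<^sup>2 * (norm ee)\<^sup>2 - c * integral\<^sup>L (Q x0 I N) (\<lambda>x. (norm (x - x0))\<^sup>2))"
        unfolding cc_def hx_def by (rule ext) (simp add: iQ)
      have icc: "integrable (measure_pmf Geo) cc" unfolding cce using j3 j4 j5 by auto
      have psie: "\<And>N. integral\<^sup>L (Q x0 I N) (\<lambda>x. Psi (x0, I, x)) = real B * cc N - real b * (f x0 - a N)"
        unfolding Psi_def cc_def a_def hx_def k1_def k2_def k3_def k4_def k5_def k6_def ee_def
        by (simp add: iQ)
      have step: "\<And>k. a (Suc k) \<le> a k - cc k"
      proof -
        fix k
        have "a (Suc k) = integral\<^sup>L (bind_pmf (Q x0 I k) (svrg_step n G lam eta b (gradB G I x0) x0)) f"
          unfolding a_def Q_def by (simp only: inner_Suc_last)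
        also have "\<dots> = (\<integral>y. integral\<^sup>L (svrg_step n G lam eta b (gradB G I x0) x0 y) f \<partial>Q x0 I k)"
        proof -
          have "integrable (measure_pmf (bind_pmf (Q x0 I k) (svrg_step n G lam eta b (gradB G I x0) x0))) f"
            using iQ[of "Suc k" f] unfolding Q_def by (simp only: inner_Suc_last)
          from bind_pmf_integral[OF this] show ?thesis by blast
        qed
        also have "\<dots> \<le> (\<integral>y. f y - hx y \<partial>Q x0 I k)"
        proof (rule integral_mono[OF iQ iQ])
          fix y
          show "integral\<^sup>L (svrg_step n G lam eta b (gradB G I x0) x0 y) f \<le> f y - hx y"
            unfolding hx_def ee_def e_def al_def c_def gradf_def
            by (rule order_trans[OF step_ineq[OF b smooth desc[where x=y, unfolded gradf_def] L0]]) (auto simp: algebra_simps)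
        qed
        also have "\<dots> = a k - cc k" unfolding a_def cc_def by (simp add: iQ)
        finally show "a (Suc k) \<le> a k - cc k" .
      qed
      have a0: "a 0 = f x0" unfolding a_def Q_def by (simp add: integral_return_pmf_real)
      have core: "(1 - p) * (\<integral>k. cc k \<partial>Geo) \<le> p * (a 0 - (\<integral>k. a k \<partial>Geo))"
        unfolding Geo_def by (rule geom_core[OF ia[unfolded Geo_def] icc[unfolded Geo_def] p step])
      have D: "0 < real B + real b" using B b by simp
      have e1: "real B * (\<integral>k. cc k \<partial>Geo) = (real B + real b) * ((1 - p) * (\<integral>k. cc k \<partial>Geo))"
        using D unfolding p1 by (simp add: field_simps)
      have e2: "real b * (f x0 - (\<integral>k. a k \<partial>Geo)) = (real B + real b) * (p * (a 0 - (\<integral>k. a k \<partial>Geo)))"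
        using D unfolding p_def a0 by (simp add: field_simps)
      have "real B * (\<integral>k. cc k \<partial>Geo) \<le> real b * (f x0 - (\<integral>k. a k \<partial>Geo))"
        unfolding e1 e2 using core D by (intro mult_left_mono) auto
      moreover have "(\<integral>N. integral\<^sup>L (Q x0 I N) (\<lambda>x. Psi (x0, I, x)) \<partial>Geo)
          = real B * (\<integral>k. cc k \<partial>Geo) - real b * (f x0 - (\<integral>k. a k \<partial>Geo))"
        unfolding psie using ia icc by (simp add: algebra_simps)
      ultimately show "(\<integral>N. integral\<^sup>L (Q x0 I N) (\<lambda>x. Psi (x0, I, x)) \<partial>Geo) \<le> 0" by linarith
    qed
    show ?thesis unfolding PP by (rule DS(2)[OF iPsi[unfolded PP] main])
  qed
  hence "real B * (al * integral\<^sup>L P k3 + eta * integral\<^sup>L P k4 - L * eta\<^sup>2 * integral\<^sup>L P k6 - c * integral\<^sup>L P k5)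
      - real b * integral\<^sup>L P k12 \<le> 0" unfolding intPsi .
  thus ?thesis unfolding al_def c_def k3_def k4_def k5_def k6_def k12_def using b
    by (simp add: field_simps)
qed


end
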